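(* Let $M\subset[0,1)$ be measurable with $M\cap s(M)=\emptyset$ and $M\cup s(M)=[0,1)$ up to null sets, $m_0=\operatorname{Per}(\chi_M)$, and let $F\subset\mathbb{R}$, $\hat\varphi=\chi_F$, satisfy $\hat\varphi(x)=\prod_{n\ge1}m_0(x/2^n)$, i.e. $F=\bigcap_{n\ge1}2^n\operatorname{Per}(M)$. The following are equivalent: (i) $\lim_{n\to\infty}\hat\varphi(x/2^n)=1$ for a.e. $x\in\mathbb{R}$; (ii) $\bigcup_{n\ge1}2^nF=\mathbb{R}$ up to measure zero; (iii) $\lim_{n\to\infty}m_0(x/2^n)=1$ for a.e. $x\in\mathbb{R}$; (iv) $\lim_{n\to\infty}m_0(\tau_0^nx)=1$ and $\lim_{n\to\infty}m_0(\tau_1^nx)=1$ for a.e. $x\in[0,1)$; (v) for a.e. $x\in[0,1)$, the chosen paths satisfy $\omega(\tau_0^nx)=000\cdots$ and $\omega(\tau_1^nx)=111\cdots$ for all sufficiently large $n$; (vi) for a.e. $x\in[0,1)$, the set $A(x)$ contains the words $\omega_1\cdots\omega_n000\cdots$ and $\omega_1\cdots\omega_n111\cdots$ for all $n\ge0$ and all $\omega_1,\dots,\omega_n\in\{0,1\}$.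
   Context: On $[0,1)$: $\tau_0(x)=x/2$, $\tau_1(x)=(x+1)/2$, $s(x)=(x+\frac12)\bmod1$. $\operatorname{Per}(A)=\bigcup_{k\in\mathbb{Z}}(A+k)$, $\operatorname{Per}(\chi_M)(x)=\sum_k\chi_M(x+k)$. Chosen path: for (a.e.) $x\in[0,1)$ exactly one of $\tau_0x,\tau_1x$ lies in $M$; let $\omega_1$ be the digit with $\tau_{\omega_1}x\in M$ and inductively $\omega_{n+1}$ the unique digit with $\tau_{\omega_{n+1}}\tau_{\omega_n}\cdots\tau_{\omega_1}x\in M$; $\omega(x)=\omega_1\omega_2\cdots\in\{0,1\}^{\mathbb{N}}$. $A(x)=\{\eta_1\cdots\eta_n\,\omega(\tau_{\eta_n}\cdots\tau_{\eta_1}x)\mid n\ge0,\ \eta_i\in\{0,1\}\}$. *)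

theory Defs
  imports "HOL-Analysis.Analysis"
begin

definition tau0 :: "real \<Rightarrow> real" where "tau0 x = x / 2"
definition tau1 :: "real \<Rightarrow> real" where "tau1 x = (x + 1) / 2"
definition tau :: "nat \<Rightarrow> real \<Rightarrow> real" where "tau d = (if d = 0 then tau0 else tau1)"
definition shift :: "real \<Rightarrow> real" where "shift x = frac (x + 1/2)"

definition Per :: "real set \<Rightarrow> real set" where
  "Per A = (\<Union>k::int. (\<lambda>y. y + of_int k) ` A)"

definition Per_chi :: "real set \<Rightarrow> real \<Rightarrow> real" where
  "Per_chi M x = (\<Sum>\<^sub>\<infinity>k::int. indicator M (x + of_int k))"

definition dil :: "real \<Rightarrow> real set \<Rightarrow> real set" where
  "dil c A = (\<lambda>y. c * y) ` A"

definition Fset :: "real set \<Rightarrow> real set" where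
  "Fset M = (\<Inter>n\<in>{1..}. dil (2 ^ n) (Per M))"

text \<open>Chosen path. The digit is the unique d with tau_d x in M; where this is not
  unique (a null set of starting points), we use the convention: 0 if tau0 x in M, else 1.\<close>
definition digit :: "real set \<Rightarrow> real \<Rightarrow> nat" where
  "digit M x = (if tau0 x \<in> M then 0 else 1)"

fun pathpt :: "real set \<Rightarrow> real \<Rightarrow> nat \<Rightarrow> real" where
  "pathpt M x 0 = x"
| "pathpt M x (Suc n) = tau (digit M (pathpt M x n)) (pathpt M x n)"

text \<open>omega M x n is the digit omega_(n+1)(x) (0-indexed infinite word).\<close>
definition omega :: "real set \<Rightarrow> real \<Rightarrow> nat \<Rightarrow> nat" where
  "omega M x n = digit M (pathpt M x n)"

definition conc :: "nat list \<Rightarrow> (nat \<Rightarrow> nat) \<Rightarrow> nat \<Rightarrow> nat" where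
  "conc u w = (\<lambda>i. if i < length u then u ! i else w (i - length u))"

definition Aset :: "real set \<Rightarrow> real \<Rightarrow> (nat \<Rightarrow> nat) set" where
  "Aset M x = {conc eta (omega M (foldl (\<lambda>y d. tau d y) x eta)) | eta. set eta \<subseteq> {0, 1}}"

end

theory Submission
  imports Defs
begin


lemma Per_chi_eq:
  assumes "M \<subseteq> {0..<1}"
  shows "Per_chi M x = of_bool (frac x \<in> M)"
proof -
  have "Per_chi M x = (\<Sum>\<^sub>\<infinity>k\<in>{-\<lfloor>x\<rfloor>}. indicator M (x + of_int k))"
    unfolding Per_chi_def
  proof (rule infsum_cong_neutral)
    fix k :: int assume "k \<in> UNIV - {-\<lfloor>x\<rfloor>}"
    then have "k \<noteq> - \<lfloor>x\<rfloor>" by simp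
    then have "x + of_int k \<notin> {0..<1}"
      by (smt (verit, ccfv_threshold) atLeastLessThan_iff floor_unique of_int_minus)
    then show "indicator M (x + of_int k) = (0::real)" using assms by (auto simp: indicator_def)
  qed auto
  also have "\<dots> = indicator M (frac x)" by (simp add: frac_def)
  finally show ?thesis by (simp add: indicator_def)
qed

lemma Per_mem:
  assumes "M \<subseteq> {0..<1}"
  shows "z \<in> Per M \<longleftrightarrow> frac z \<in> M"
proof
  assume "z \<in> Per M"
  then obtain k m where "m \<in> M" "z = m + of_int k" unfolding Per_def by auto
  moreover have "frac m = m" using \<open>m \<in> M\<close> assms by (auto simp: frac_eq)
  ultimately show "frac z \<in> M" by (simp add: frac_def)
next
  assume "frac z \<in> M"
  moreover have "z = frac z + of_int \<lfloor>z\<rfloor>" by (simp add: frac_def)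
  ultimately show "z \<in> Per M" unfolding Per_def by blast
qed

lemma dil_mem:
  assumes "c \<noteq> 0"
  shows "z \<in> dil c A \<longleftrightarrow> z / c \<in> A"
proof
  assume "z \<in> dil c A" then show "z / c \<in> A" using assms unfolding dil_def by auto
next
  assume "z / c \<in> A"
  moreover have "z = c * (z / c)" using assms by simp
  ultimately show "z \<in> dil c A" unfolding dil_def by blast
qed

lemma Fset_mem:
  assumes "M \<subseteq> {0..<1}"
  shows "y \<in> Fset M \<longleftrightarrow> (\<forall>n\<ge>1. frac (y / 2 ^ n) \<in> M)"
  unfolding Fset_def using Per_mem[OF assms] dil_mem[of "2 ^ _"] by auto

lemma tendsto01: "((\<lambda>n. of_bool (A n) :: real) \<longlonglongrightarrow> 1) \<longleftrightarrow> eventually A sequentially"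
proof
  assume "((\<lambda>n. of_bool (A n) :: real) \<longlonglongrightarrow> 1)"
  from tendstoD[OF this, of "1/2"]
  have "eventually (\<lambda>n. dist (of_bool (A n) :: real) 1 < 1/2) sequentially" by simp
  then show "eventually A sequentially" by (rule eventually_mono) (auto simp: of_bool_def split: if_splits)
next
  assume "eventually A sequentially"
  then have "eventually (\<lambda>n. (of_bool (A n) :: real) = 1) sequentially" by (rule eventually_mono) auto
  then show "((\<lambda>n. of_bool (A n) :: real) \<longlonglongrightarrow> 1)" by (rule tendsto_eventually)
qed

lemma AE_affine:
  assumes "AE x in lebesgue. P x" "c \<noteq> (0::real)"
  shows "AE x in lebesgue. P (a + c * x)"
proof -
  from assms(1) obtain N where N: "negligible N" "{x. \<not> P x} \<subseteq> N"
    unfolding eventually_ae_filter_negligible by blast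
  have "negligible ((\<lambda>y. (1/c) * (y - a)) ` N)"
    apply (rule negligible_differentiable_image_negligible) apply simp apply (rule N(1)) by (intro differentiable_on_mult differentiable_on_const differentiable_on_diff differentiable_on_ident)
  moreover have "{x. \<not> P (a + c*x)} \<subseteq> (\<lambda>y. (1/c) * (y - a)) ` N"
  proof
    fix x assume "x \<in> {x. \<not> P (a + c*x)}"
    then have "a + c*x \<in> N" using N(2) by auto
    moreover have "x = (1/c) * ((a + c*x) - a)" using assms(2) by simp
    ultimately show "x \<in> (\<lambda>y. (1/c) * (y - a)) ` N" by blast
  qed
  ultimately show ?thesis unfolding eventually_ae_filter_negligible by (meson negligible_subset)
qed

lemma ev_tail1: "eventually (\<lambda>n. \<forall>j\<ge>1. A (n + j)) sequentially \<longleftrightarrow> eventually A sequentially"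
  unfolding eventually_sequentially
proof
  assume "\<exists>N. \<forall>n\<ge>N. \<forall>j\<ge>1. A (n + j)"
  then obtain N where N: "\<forall>n\<ge>N. \<forall>j\<ge>1. A (n + j)" by blast
  have "A m" if "m \<ge> N + 1" for m using N[rule_format, of N "m - N"] that by auto
  then show "\<exists>N. \<forall>n\<ge>N. A n" by blast
qed (meson le_add1 order_trans)

lemma ev_tail2: "(\<exists>N. \<forall>n\<ge>N. \<forall>k. A (k + n)) \<longleftrightarrow> eventually A sequentially"
  unfolding eventually_sequentially
proof
  assume "\<exists>N. \<forall>n\<ge>N. A n"
  then show "\<exists>N. \<forall>n\<ge>N. \<forall>k. A (k + n)" by (metis le_add2 le_trans)
qed (metis add_0)

lemma tau0_pow: "(tau0 ^^ n) x = x / 2 ^ n"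
  by (induction n) (auto simp: tau0_def)

lemma tau1_pow: "(tau1 ^^ n) x = 1 + (x - 1) / 2 ^ n"
  by (induction n) (auto simp: tau1_def field_simps)

lemma tau_simps: "tau 0 = tau0" "tau (Suc 0) = tau1" by (auto simp: tau_def)

lemma pathpt_shift: "pathpt M y (Suc n) = pathpt M (pathpt M y 1) n"
  by (induction n) auto

lemma omega_shift:
  assumes "omega M y = (\<lambda>_. d)"
  shows "omega M (tau d y) = (\<lambda>_. d)"
proof
  fix n
  have "omega M (tau d y) n = omega M y (Suc n)"
    using assms unfolding omega_def
    by (metis One_nat_def pathpt.simps pathpt_shift)
  then show "omega M (tau d y) n = d" using assms by simp
qed

lemma omega_mono:
  assumes "omega M ((tau d ^^ L) x) = (\<lambda>_. d)" "n \<ge> L"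
  shows "omega M ((tau d ^^ n) x) = (\<lambda>_. d)"
  using assms(2)
proof (induction n rule: dec_induct)
  case base then show ?case using assms(1) .
next
  case (step n) then show ?case using omega_shift by simp
qed

lemma omega0: "omega M y = (\<lambda>_. 0) \<longleftrightarrow> (\<forall>k. tau0 ((tau0 ^^ k) y) \<in> M)"
proof
  assume H: "omega M y = (\<lambda>_. 0)"
  have P: "pathpt M y n = (tau0 ^^ n) y" for n
  proof (induction n)
    case (Suc n)
    have "digit M (pathpt M y n) = 0" using H unfolding omega_def by meson
    then show ?case using Suc by (simp add: tau_simps)
  qed simp
  show "\<forall>k. tau0 ((tau0 ^^ k) y) \<in> M"
  proof
    fix k
    have "digit M (pathpt M y k) = 0" using H unfolding omega_def by meson
    then show "tau0 ((tau0 ^^ k) y) \<in> M" using P by (simp add: digit_def split: if_splits)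
  qed
next
  assume H: "\<forall>k. tau0 ((tau0 ^^ k) y) \<in> M"
  have P: "pathpt M y n = (tau0 ^^ n) y" for n
    by (induction n) (use H in \<open>auto simp: digit_def tau_simps\<close>)
  show "omega M y = (\<lambda>_. 0)" using H P by (auto simp: omega_def digit_def)
qed

lemma omega1: "omega M y = (\<lambda>_. 1) \<longleftrightarrow> (\<forall>k. tau0 ((tau1 ^^ k) y) \<notin> M)"
proof
  assume H: "omega M y = (\<lambda>_. 1)"
  have P: "pathpt M y n = (tau1 ^^ n) y" for n
  proof (induction n)
    case (Suc n)
    have "digit M (pathpt M y n) = 1" using H unfolding omega_def by meson
    then show ?case using Suc by (simp add: tau_simps)
  qed simp
  show "\<forall>k. tau0 ((tau1 ^^ k) y) \<notin> M"
  proof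
    fix k
    have "digit M (pathpt M y k) = 1" using H unfolding omega_def by meson
    then show "tau0 ((tau1 ^^ k) y) \<notin> M" using P by (simp add: digit_def split: if_splits)
  qed
next
  assume H: "\<forall>k. tau0 ((tau1 ^^ k) y) \<notin> M"
  have P: "pathpt M y n = (tau1 ^^ n) y" for n
    by (induction n) (use H in \<open>auto simp: digit_def tau_simps\<close>)
  show "omega M y = (\<lambda>_. 1)" using H P by (auto simp: omega_def digit_def)
qed

lemma foldl_affine: "\<exists>a c. c \<noteq> (0::real) \<and> (\<forall>x. foldl (\<lambda>y d. tau d y) x eta = a + c * x)"
proof (induction eta rule: rev_induct)
  case Nil then show ?case by (rule exI[of _ 0], rule exI[of _ 1]) simp
next
  case (snoc d eta)
  then obtain a c where ac: "c \<noteq> 0" "\<forall>x. foldl (\<lambda>y d. tau d y) x eta = a + c * x" by blast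
  define e :: real where "e = (if d = 0 then 0 else 1)"
  have "foldl (\<lambda>y d. tau d y) x (eta @ [d]) = (a + e)/2 + (c/2) * x" for x
    using ac by (simp add: tau_def tau0_def tau1_def e_def field_simps)
  then show ?case using ac(1) by (intro exI[of _ "(a+e)/2"] exI[of _ "c/2"]) simp
qed

lemma foldl_unit: "x \<in> {0..<1} \<Longrightarrow> foldl (\<lambda>y d. tau d y) x eta \<in> {0..<(1::real)}"
  by (induction eta rule: rev_induct) (auto simp: tau_def tau0_def tau1_def)

lemma foldl_rep: "foldl (\<lambda>y d. tau d y) y (replicate N d) = (tau d ^^ N) y"
  by (induction N arbitrary: y) (auto simp: funpow_swap1)

lemma conc_rep: "conc (eta @ replicate N d) (\<lambda>_. d) = conc eta (\<lambda>_. d)"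
  by (auto simp: conc_def nth_append)

lemma tau_one: "tau 1 = tau1" by (simp add: tau_def)

lemma conc_Nil: "conc [] w = w" by (simp add: conc_def)

lemma AE_iff_null_leb: "(AE x in lebesgue. R x) \<longleftrightarrow> {x. \<not> R x} \<in> null_sets lebesgue"
  unfolding eventually_ae_filter_negligible negligible_iff_null_sets[symmetric]
  by (meson negligible_subset order_refl)

lemma tau1_unit: "x \<in> {0..<1} \<Longrightarrow> (tau1 ^^ m) x \<in> {0..<(1::real)}"
  by (induction m) (auto simp: tau1_def)

lemma tau0_unit: "x \<in> {0..<1} \<Longrightarrow> (tau0 ^^ m) x \<in> {0..<(1::real)}"
  by (induction m) (auto simp: tau0_def)

lemma shift_val: "m \<in> {0..<1} \<Longrightarrow> shift m = (if m < 1/2 then m + 1/2 else m - 1/2)"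
  unfolding shift_def frac_def by (auto simp: floor_eq_iff)

lemma Aset_const:
  assumes "conc [] (\<lambda>_. d) \<in> Aset M x"
  shows "\<exists>N. \<forall>n\<ge>N. omega M ((tau d ^^ n) x) = (\<lambda>_. d)"
proof -
  from assms obtain eta where eta: "set eta \<subseteq> {0,1}"
    "(\<lambda>_. d) = conc eta (omega M (foldl (\<lambda>y d. tau d y) x eta))"
    unfolding Aset_def by (auto simp: conc_Nil)
  have all: "\<forall>i<length eta. eta ! i = d"
  proof (intro allI impI)
    fix i assume "i < length eta"
    with fun_cong[OF eta(2), of i] show "eta ! i = d" by (simp add: conc_def)
  qed
  then have rep: "eta = replicate (length eta) d" by (simp add: list_eq_iff_nth_eq)
  define L where "L = length eta"
  have "omega M ((tau d ^^ L) x) = (\<lambda>_. d)"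
  proof
    fix j
    from fun_cong[OF eta(2), of "L + j"]
    have "d = omega M (foldl (\<lambda>y d. tau d y) x eta) j" by (simp add: conc_def L_def)
    moreover have "foldl (\<lambda>y d. tau d y) x eta = (tau d ^^ L) x"
      using rep foldl_rep unfolding L_def by metis
    ultimately show "omega M ((tau d ^^ L) x) j = d" by simp
  qed
  then show ?thesis using omega_mono by blast
qed

lemma Aset_intro:
  assumes "omega M ((tau d ^^ N) (foldl (\<lambda>y d. tau d y) x eta)) = (\<lambda>_. d)"
    "set eta \<subseteq> {0,1}" "d \<in> {0,1}"
  shows "conc eta (\<lambda>_. d) \<in> Aset M x"
proof -
  have "conc eta (\<lambda>_. d) = conc (eta @ replicate N d)
          (omega M (foldl (\<lambda>y d. tau d y) x (eta @ replicate N d)))"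
    using assms(1) by (simp add: conc_rep foldl_rep)
  moreover have "set (eta @ replicate N d) \<subseteq> {0,1}" using assms(2,3) by auto
  ultimately show ?thesis unfolding Aset_def by blast
qed



theorem proposition3p16:
  fixes M :: "real set"
  assumes M_sub: "M \<subseteq> {0..<1}"
    and M_meas: "M \<in> sets lebesgue"
    and disj: "M \<inter> shift ` M \<in> null_sets lebesgue"
    and cover: "({0..<1} - (M \<union> shift ` M)) \<union> ((M \<union> shift ` M) - {0..<1}) \<in> null_sets lebesgue"
  defines "m0 \<equiv> Per_chi M"
    and "F \<equiv> Fset M"
  defines "phi \<equiv> (indicator F :: real \<Rightarrow> real)"
  defines "c1 \<equiv> (AE x in lebesgue. (\<lambda>n. phi (x / 2 ^ n)) \<longlonglongrightarrow> 1)"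
    and "c2 \<equiv> (UNIV - (\<Union>n\<in>{1::nat..}. dil (2 ^ n) F) \<in> null_sets lebesgue)"
    and "c3 \<equiv> (AE x in lebesgue. (\<lambda>n. m0 (x / 2 ^ n)) \<longlonglongrightarrow> 1)"
    and "c4 \<equiv> (AE x in lebesgue. x \<in> {0..<1} \<longrightarrow>
                 ((\<lambda>n. m0 ((tau0 ^^ n) x)) \<longlonglongrightarrow> 1) \<and> ((\<lambda>n. m0 ((tau1 ^^ n) x)) \<longlonglongrightarrow> 1))"
    and "c5 \<equiv> (AE x in lebesgue. x \<in> {0..<1} \<longrightarrow>
                 (\<exists>N. \<forall>n\<ge>N. omega M ((tau0 ^^ n) x) = (\<lambda>_. 0)) \<and>
                 (\<exists>N. \<forall>n\<ge>N. omega M ((tau1 ^^ n) x) = (\<lambda>_. 1)))"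
    and "c6 \<equiv> (AE x in lebesgue. x \<in> {0..<1} \<longrightarrow>
                 (\<forall>eta. set eta \<subseteq> {0, 1} \<longrightarrow>
                    conc eta (\<lambda>_. 0) \<in> Aset M x \<and> conc eta (\<lambda>_. 1) \<in> Aset M x))"
  shows "(c1 \<longleftrightarrow> c2) \<and> (c2 \<longleftrightarrow> c3) \<and> (c3 \<longleftrightarrow> c4) \<and> (c4 \<longleftrightarrow> c5) \<and> (c5 \<longleftrightarrow> c6)"
proof -
  define P where "P y \<longleftrightarrow> frac y \<in> M" for y
  define Q where "Q x \<longleftrightarrow> eventually (\<lambda>n. P (x / 2 ^ n)) sequentially" for x
  have m0_eq: "m0 y = of_bool (P y)" for y using Per_chi_eq[OF M_sub] by (simp add: m0_def P_def)
  have P1: "P (1 + y) = P y" for y using frac_1_eq[of y] by (simp add: P_def add.commute)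
  have Punit: "y \<in> {0..<1} \<Longrightarrow> P y \<longleftrightarrow> y \<in> M" for y by (simp add: P_def frac_eq)
  have div2: "x / 2 ^ n / 2 ^ k = x / 2 ^ (n + k)" for x :: real and n k
    by (simp add: power_add)
  have Qscale: "Q (x / 2 ^ k) \<longleftrightarrow> Q x" for x k
  proof -
    have "Q (x / 2 ^ k) \<longleftrightarrow> eventually (\<lambda>n. P (x / 2 ^ (n + k))) sequentially"
      unfolding Q_def div2 by (simp only: add.commute)
    also have "\<dots> \<longleftrightarrow> Q x" unfolding Q_def by (rule eventually_sequentially_seg)
    finally show ?thesis .
  qed
  have Fmem: "y \<in> F \<longleftrightarrow> (\<forall>j\<ge>1. P (y / 2 ^ j))" for y
    using Fset_mem[OF M_sub] by (simp add: F_def P_def)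
  have Q_alt: "Q x \<longleftrightarrow> eventually (\<lambda>n. x / 2 ^ n \<in> F) sequentially" for x
    unfolding Q_def Fmem div2 using ev_tail1[of "\<lambda>m. P (x / 2 ^ m)"] by simp
  have phi_eq: "phi y = of_bool (y \<in> F)" for y by (simp add: phi_def indicator_def)
  have c3Q: "c3 \<longleftrightarrow> (AE x in lebesgue. Q x)"
    unfolding c3_def m0_eq tendsto01 Q_def ..
  have c1Q: "c1 \<longleftrightarrow> (AE x in lebesgue. Q x)"
    unfolding c1_def phi_eq tendsto01 Q_alt ..
  have c2Q: "c2 \<longleftrightarrow> (AE x in lebesgue. Q x)"
  proof -
    have "x \<in> (\<Union>n\<in>{1::nat..}. dil (2 ^ n) F) \<longleftrightarrow> Q x" for x
    proof
      assume "x \<in> (\<Union>n\<in>{1::nat..}. dil (2 ^ n) F)"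
      then obtain n where n: "x / 2 ^ n \<in> F" using dil_mem[of "2 ^ _"] by auto
      have "x / 2 ^ m \<in> F" if "m \<ge> n" for m
      proof -
        obtain d where m: "m = n + d" using \<open>m \<ge> n\<close> le_Suc_ex by blast
        show ?thesis using n unfolding Fmem m div2
          by (metis add.assoc le_add2 order_trans)
      qed
      then show "Q x" unfolding Q_alt eventually_sequentially by blast
    next
      assume "Q x"
      then obtain N where "\<forall>n\<ge>N. x / 2 ^ n \<in> F" unfolding Q_alt eventually_sequentially by blast
      then have "x / 2 ^ (N + 1) \<in> F" by (meson le_add1)
      then show "x \<in> (\<Union>n\<in>{1::nat..}. dil (2 ^ n) F)"
        using dil_mem[of "2 ^ (N + 1)" x F] by force
    qed
    then have "UNIV - (\<Union>n\<in>{1::nat..}. dil (2 ^ n) F) = {x. \<not> Q x}" by blast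
    then show ?thesis unfolding c2_def AE_iff_null_leb by simp
  qed
  have c4Q: "c4 \<longleftrightarrow> (AE x in lebesgue. x \<in> {0..<1} \<longrightarrow> Q x \<and> Q (x - 1))"
  proof -
    have "P (1 + (x - 1) / 2 ^ n) = P ((x - 1) / 2 ^ n)" for x :: real and n by (rule P1)
    then show ?thesis unfolding c4_def tau0_pow tau1_pow m0_eq tendsto01 Q_def by simp
  qed
  have c34: "c3 \<longleftrightarrow> c4"
    unfolding c3Q c4Q
  proof
    assume A: "AE x in lebesgue. Q x"
    have B: "AE x in lebesgue. Q (-1 + 1 * x)" by (rule AE_affine[OF A]) simp
    from A B show "AE x in lebesgue. x \<in> {0..<1} \<longrightarrow> Q x \<and> Q (x - 1)"
      by eventually_elim simp
  next
    assume H: "AE x in lebesgue. x \<in> {0..<1} \<longrightarrow> Q x \<and> Q (x - 1)"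
    have H2: "AE y in lebesgue. (1 + 1 * y) \<in> {0..<1} \<longrightarrow> Q (1 + 1 * y) \<and> Q (1 + 1 * y - 1)"
      by (rule AE_affine[OF H]) simp
    have H3: "AE y in lebesgue. y \<in> {-1..<1} \<longrightarrow> Q y"
      using H H2
    proof eventually_elim
      case (elim y)
      show ?case
      proof
        assume y: "y \<in> {-1..<1}"
        show "Q y"
        proof (cases "y < 0")
          case True
          then have "1 + 1 * y \<in> {0..<1}" using y by auto
          then show ?thesis using elim(2) by simp
        next
          case False
          then show ?thesis using elim(1) y by auto
        qed
      qed
    qed
    have "\<forall>k::nat. AE x in lebesgue. x / 2 ^ k \<in> {-1..<1} \<longrightarrow> Q (x / 2 ^ k)"
    proof
      fix k :: nat
      show "AE x in lebesgue. x / 2 ^ k \<in> {-1..<1} \<longrightarrow> Q (x / 2 ^ k)"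
        using AE_affine[OF H3, of "1 / 2 ^ k" 0] by simp
    qed
    then have "AE x in lebesgue. \<forall>k::nat. x / 2 ^ k \<in> {-1..<1} \<longrightarrow> Q (x / 2 ^ k)"
      by (rule AE_all_countable[THEN iffD2])
    then show "AE x in lebesgue. Q x"
    proof (rule eventually_mono)
      fix x :: real assume K: "\<forall>k::nat. x / 2 ^ k \<in> {-1..<1} \<longrightarrow> Q (x / 2 ^ k)"
      obtain n :: nat where n: "\<bar>x\<bar> < real n" using reals_Archimedean2 by blast
      have "real n < 2 ^ n" using of_nat_less_two_power[of n] by simp
      then have "\<bar>x\<bar> < 2 ^ n" using n by linarith
      then have "\<bar>x\<bar> / 2 ^ n < 1" by simp
      then have "x / 2 ^ n \<in> {-1..<1}" by (auto simp: abs_less_iff field_simps)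
      then show "Q x" using K Qscale by blast
    qed
  qed
  define Gz where "Gz z \<longleftrightarrow> (z \<in> {0..<1} \<longrightarrow> (tau0 z \<notin> M \<longleftrightarrow> tau1 z \<in> M))" for z
  have AEG: "AE z in lebesgue. Gz z"
  proof -
    have A1: "AE z in lebesgue. 1/2 + (1/2) * z \<notin> M \<inter> shift ` M"
      by (rule AE_affine[OF AE_not_in[OF disj]]) simp
    have A2: "AE z in lebesgue. 0 + (1/2) * z \<notin>
        ({0..<1} - (M \<union> shift ` M)) \<union> ((M \<union> shift ` M) - {0..<1})"
      by (rule AE_affine[OF AE_not_in[OF cover]]) simp
    from A1 A2 show ?thesis
    proof eventually_elim
      case (elim z)
      show "Gz z" unfolding Gz_def
      proof
        assume z: "z \<in> {0..<1}"
        have sh: "shift (z/2) = (z+1)/2" using z by (simp add: shift_val)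
        show "(tau0 z \<notin> M \<longleftrightarrow> tau1 z \<in> M)"
        proof (cases "tau0 z \<in> M")
          case True
          then have "tau1 z \<in> shift ` M" using sh by (metis image_eqI tau0_def tau1_def)
          have "tau1 z \<notin> M"
          proof
            assume "tau1 z \<in> M"
            with \<open>tau1 z \<in> shift ` M\<close> have "tau1 z \<in> M \<inter> shift ` M" by blast
            moreover have "tau1 z = 1/2 + (1/2) * z" by (simp add: tau1_def)
            ultimately show False using elim(1) by simp
          qed
          then show ?thesis using True by simp
        next
          case False
          have "z/2 \<notin> shift ` M" if "tau1 z \<notin> M"
          proof
            assume "z/2 \<in> shift ` M"
            then obtain m where m: "m \<in> M" "z/2 = shift m" by auto
            then have "m \<in> {0..<1}" using M_sub by auto
            then show False using m that z by (auto simp: shift_val tau1_def split: if_splits)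
          qed
          then show ?thesis using False elim(2) z by (auto simp: tau0_def)
        qed
      qed
    qed
  qed
  have AEG2: "AE x in lebesgue. \<forall>m::nat. Gz ((tau1 ^^ m) x)"
  proof (rule AE_all_countable[THEN iffD2], rule allI)
    fix m :: nat
    have e: "(1 - 1/2^m) + (1/2^m) * x = (tau1 ^^ m) x" for x
      by (simp add: tau1_pow field_simps)
    show "AE x in lebesgue. Gz ((tau1 ^^ m) x)"
      using AE_affine[OF AEG, of "1/2^m" "1 - 1/2^m"] unfolding e by simp
  qed
  define C5 where "C5 x \<longleftrightarrow> (\<exists>N. \<forall>n\<ge>N. omega M ((tau0 ^^ n) x) = (\<lambda>_. 0)) \<and>
                 (\<exists>N. \<forall>n\<ge>N. omega M ((tau1 ^^ n) x) = (\<lambda>_. 1))" for x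
  have part0: "(\<exists>N. \<forall>n\<ge>N. omega M ((tau0 ^^ n) x) = (\<lambda>_. 0)) \<longleftrightarrow> Q x"
    if x: "x \<in> {0..<1}" for x
  proof -
    have e: "tau0 ((tau0 ^^ k) ((tau0 ^^ n) x)) = x / 2 ^ (Suc (k + n))" for k n
      by (simp add: tau0_pow tau0_def power_add field_simps)
    have "(\<exists>N. \<forall>n\<ge>N. omega M ((tau0 ^^ n) x) = (\<lambda>_. 0)) \<longleftrightarrow>
          (\<exists>N. \<forall>n\<ge>N. \<forall>k. x / 2 ^ (Suc (k + n)) \<in> M)"
      unfolding omega0 e ..
    also have "\<dots> \<longleftrightarrow> eventually (\<lambda>m. x / 2 ^ Suc m \<in> M) sequentially"
      by (rule ev_tail2)
    also have "\<dots> \<longleftrightarrow> eventually (\<lambda>m. x / 2 ^ m \<in> M) sequentially"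
      by (rule eventually_sequentially_Suc)
    also have "\<dots> \<longleftrightarrow> Q x"
    proof -
      have "x / 2 ^ m \<in> {0..<1}" for m using tau0_unit[OF x, of m] by (simp add: tau0_pow)
      then show ?thesis unfolding Q_def using Punit by simp
    qed
    finally show ?thesis .
  qed
  have part1: "(\<exists>N. \<forall>n\<ge>N. omega M ((tau1 ^^ n) x) = (\<lambda>_. 1)) \<longleftrightarrow> Q (x - 1)"
    if x: "x \<in> {0..<1}" and G: "\<forall>m. Gz ((tau1 ^^ m) x)" for x
  proof -
    have e: "tau0 ((tau1 ^^ k) ((tau1 ^^ n) x)) = tau0 ((tau1 ^^ (k + n)) x)" for k n
      by (simp add: funpow_add)
    have "(\<exists>N. \<forall>n\<ge>N. omega M ((tau1 ^^ n) x) = (\<lambda>_. 1)) \<longleftrightarrow>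
          (\<exists>N. \<forall>n\<ge>N. \<forall>k. tau0 ((tau1 ^^ (k + n)) x) \<notin> M)"
      unfolding omega1 e ..
    also have "\<dots> \<longleftrightarrow> eventually (\<lambda>m. tau0 ((tau1 ^^ m) x) \<notin> M) sequentially"
      by (rule ev_tail2)
    also have "\<dots> \<longleftrightarrow> eventually (\<lambda>m. P ((x - 1) / 2 ^ Suc m)) sequentially"
    proof -
      have "tau0 ((tau1 ^^ m) x) \<notin> M \<longleftrightarrow> P ((x - 1) / 2 ^ Suc m)" for m
      proof -
        have "tau0 ((tau1 ^^ m) x) \<notin> M \<longleftrightarrow> (tau1 ^^ Suc m) x \<in> M"
          using G tau1_unit[OF x, of m] unfolding Gz_def by simp
        also have "\<dots> \<longleftrightarrow> P ((tau1 ^^ Suc m) x)"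
          using Punit tau1_unit[OF x, of "Suc m"] by simp
        also have "\<dots> \<longleftrightarrow> P ((x - 1) / 2 ^ Suc m)"
          unfolding tau1_pow by (rule P1)
        finally show ?thesis .
      qed
      then show ?thesis by simp
    qed
    also have "\<dots> \<longleftrightarrow> Q (x - 1)"
      unfolding Q_def by (rule eventually_sequentially_Suc)
    finally show ?thesis .
  qed
  have c45: "c4 \<longleftrightarrow> c5"
  proof -
    have "c5 \<longleftrightarrow> (AE x in lebesgue. x \<in> {0..<1} \<longrightarrow> Q x \<and> Q (x - 1))"
    proof
      assume "c5"
      then have H: "AE x in lebesgue. x \<in> {0..<1} \<longrightarrow> C5 x" unfolding c5_def C5_def .
      from H AEG2 show "AE x in lebesgue. x \<in> {0..<1} \<longrightarrow> Q x \<and> Q (x - 1)"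
        by eventually_elim (use part0 part1 in \<open>auto simp: C5_def\<close>)
    next
      assume H: "AE x in lebesgue. x \<in> {0..<1} \<longrightarrow> Q x \<and> Q (x - 1)"
      from H AEG2 have "AE x in lebesgue. x \<in> {0..<1} \<longrightarrow> C5 x"
        by eventually_elim (use part0 part1 in \<open>auto simp: C5_def\<close>)
      then show c5 unfolding c5_def C5_def .
    qed
    then show ?thesis using c4Q by simp
  qed
  define C6 where "C6 x \<longleftrightarrow> (\<forall>eta. set eta \<subseteq> {0, 1} \<longrightarrow>
                    conc eta (\<lambda>_. 0) \<in> Aset M x \<and> conc eta (\<lambda>_. 1) \<in> Aset M x)" for x
  have C65: "C6 x \<Longrightarrow> C5 x" for x
  proof -
    assume "C6 x"
    then have "conc [] (\<lambda>_. 0) \<in> Aset M x" "conc [] (\<lambda>_. 1) \<in> Aset M x"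
      unfolding C6_def by auto
    from Aset_const[OF this(1)] Aset_const[OF this(2)] show "C5 x"
      unfolding C5_def tau_simps(1) tau_one by blast
  qed
  have C56: "C6 x" if "\<forall>eta. set eta \<subseteq> {0,1} \<longrightarrow> C5 (foldl (\<lambda>y d. tau d y) x eta)" for x
    unfolding C6_def
  proof (intro allI impI conjI)
    fix eta :: "nat list" assume eta: "set eta \<subseteq> {0,1}"
    then have "C5 (foldl (\<lambda>y d. tau d y) x eta)" using that by blast
    then obtain N1 N2 where
      "omega M ((tau 0 ^^ N1) (foldl (\<lambda>y d. tau d y) x eta)) = (\<lambda>_. 0)"
      "omega M ((tau 1 ^^ N2) (foldl (\<lambda>y d. tau d y) x eta)) = (\<lambda>_. 1)"
      unfolding C5_def tau_simps(1) tau_one by blast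
    then show "conc eta (\<lambda>_. 0) \<in> Aset M x" "conc eta (\<lambda>_. 1) \<in> Aset M x"
      using Aset_intro eta by auto
  qed
  have c56: "c5 \<longleftrightarrow> c6"
  proof
    assume "c5"
    then have H: "AE x in lebesgue. x \<in> {0..<1} \<longrightarrow> C5 x" unfolding c5_def C5_def .
    have "\<forall>eta::nat list. AE x in lebesgue. foldl (\<lambda>y d. tau d y) x eta \<in> {0..<1} \<longrightarrow>
            C5 (foldl (\<lambda>y d. tau d y) x eta)"
    proof
      fix eta :: "nat list"
      obtain a c where ac: "c \<noteq> 0" "\<forall>x. foldl (\<lambda>y d. tau d y) x eta = a + c * x"
        using foldl_affine by blast
      show "AE x in lebesgue. foldl (\<lambda>y d. tau d y) x eta \<in> {0..<1} \<longrightarrow>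
            C5 (foldl (\<lambda>y d. tau d y) x eta)"
        using AE_affine[OF H ac(1), of a] ac(2) by simp
    qed
    then have "AE x in lebesgue. \<forall>eta::nat list. foldl (\<lambda>y d. tau d y) x eta \<in> {0..<1} \<longrightarrow>
            C5 (foldl (\<lambda>y d. tau d y) x eta)"
      by (rule AE_all_countable[THEN iffD2])
    then have "AE x in lebesgue. x \<in> {0..<1} \<longrightarrow> C6 x"
    proof (rule eventually_mono)
      fix x :: real
      assume A: "\<forall>eta::nat list. foldl (\<lambda>y d. tau d y) x eta \<in> {0..<1} \<longrightarrow>
            C5 (foldl (\<lambda>y d. tau d y) x eta)"
      show "x \<in> {0..<1} \<longrightarrow> C6 x"
      proof
        assume x: "x \<in> {0..<1}"
        have "\<forall>eta. set eta \<subseteq> {0,1} \<longrightarrow> C5 (foldl (\<lambda>y d. tau d y) x eta)"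
          using A foldl_unit[OF x] by simp
        then show "C6 x" by (rule C56)
      qed
    qed
    then show c6 unfolding c6_def C6_def .
  next
    assume c6
    then have "AE x in lebesgue. x \<in> {0..<1} \<longrightarrow> C6 x" unfolding c6_def C6_def .
    then have "AE x in lebesgue. x \<in> {0..<1} \<longrightarrow> C5 x"
      by (rule eventually_mono) (simp add: C65)
    then show c5 unfolding c5_def C5_def .
  qed
  show ?thesis using c1Q c2Q c3Q c34 c45 c56 by blast
qed


end
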